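(* For every integer $m\ge3$, $6$ divides $P_m(3)$.
   Context: The Ducci function $D:\mathbb{Z}_m^3\to\mathbb{Z}_m^3$ is $D(x_1,x_2,x_3)=(x_1+x_2,\,x_2+x_3,\,x_3+x_1)$, entries mod $m$. The period $\mathrm{Per}(\mathbf{u})$ is the smallest $k\ge1$ such that $D^{l+k}(\mathbf{u})=D^l(\mathbf{u})$ for some $l\ge0$, and $P_m(3)=\mathrm{Per}(0,0,1)$. *)

theory Defs
  imports Main
begin

text \<open>Elements of Z_m are represented by naturals reduced mod m; a triple in Z_m^3
  is a nat triple.\<close>

definition ducci :: "nat \<Rightarrow> nat \<times> nat \<times> nat \<Rightarrow> nat \<times> nat \<times> nat" where
  "ducci m u = (case u of (x1, x2, x3) \<Rightarrow>
     ((x1 + x2) mod m, (x2 + x3) mod m, (x3 + x1) mod m))"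

definition ducci_period :: "nat \<Rightarrow> nat \<times> nat \<times> nat \<Rightarrow> nat" where
  "ducci_period m u =
     (LEAST k. k \<ge> 1 \<and> (\<exists>l. (ducci m ^^ (l + k)) u = (ducci m ^^ l) u))"

definition P3 :: "nat \<Rightarrow> nat" where
  "P3 m = ducci_period m (0, 0, 1)"

end

theory Submission imports Defs begin
definition G :: "nat \<Rightarrow> int \<times> int \<times> int" where
  "G r = [(0,-1,1),(-1,0,1),(-1,1,0),(0,1,-1),(1,0,-1),(1,-1,0)] ! (r mod 6)"

lemma G_cases: obtains "(n::nat) mod 6 = 0" | "n mod 6 = 1" | "n mod 6 = 2" | "n mod 6 = 3" | "n mod 6 = 4" | "n mod 6 = 5"
  by linarith

lemma G_step: "G (Suc n) = (case G n of (x,y,z) \<Rightarrow> (-z,-x,-y))"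
  by (rule G_cases[of n]) (simp_all add: G_def mod_Suc)

lemma G_range: "G n \<in> {(0,-1,1),(-1,0,1),(-1,1,0),(0,1,-1),(1,0,-1),(1,-1,0)}"
  by (rule G_cases[of n]) (simp_all add: G_def)

definition idx :: "int \<times> int \<times> int \<Rightarrow> nat" where
  "idx t = (if t = (0,-1,1) then 0 else if t = (-1,0,1) then 1 else if t = (-1,1,0) then 2
     else if t = (0,1,-1) then 3 else if t = (1,0,-1) then 4 else 5)"

lemma idx_G: "idx (G n) = n mod 6"
  by (rule G_cases[of n]) (simp_all add: G_def idx_def)

lemma G_inj: "G a = G b \<Longrightarrow> a mod 6 = b mod 6"
  by (metis idx_G)
lemma small_eq:
  fixes x y M :: int
  assumes "x \<in> {-1,0,1}" "y \<in> {-1,0,1}" "M \<ge> 3" "x mod M = y mod M"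
  shows "x = y"
proof (rule ccontr)
  assume ne: "x \<noteq> y"
  have "M dvd (x - y)" using assms(4) by (simp add: mod_eq_dvd_iff)
  then have "\<bar>M\<bar> \<le> \<bar>x - y\<bar>" using ne by (intro dvd_imp_le_int) auto
  moreover have "\<bar>x - y\<bar> \<le> 2" using assms(1,2) by auto
  ultimately show False using assms(3) by simp
qed

definition dif :: "nat \<Rightarrow> nat \<times> nat \<times> nat \<Rightarrow> int \<times> int \<times> int" where
  "dif m u = (case u of (a,b,c) \<Rightarrow>
     ((int a - int b) mod int m, (int b - int c) mod int m, (int c - int a) mod int m))"

lemma dif_step:
  "dif m (ducci m u) = (case dif m u of (x,y,z) \<Rightarrow> ((-z) mod int m, (-x) mod int m, (-y) mod int m))"
proof -
  obtain a b c where u: "u = (a,b,c)" by (cases u) auto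
  let ?M = "int m"
  have e1: "(int ((a+b) mod m) - int ((b+c) mod m)) mod ?M = (- ((int c - int a) mod ?M)) mod ?M"
  proof -
    have "(int ((a+b) mod m) - int ((b+c) mod m)) mod ?M = (int (a+b) - int (b+c)) mod ?M"
      by (simp add: zmod_int mod_diff_eq)
    also have "\<dots> = (- (int c - int a)) mod ?M" by simp
    also have "\<dots> = (- ((int c - int a) mod ?M)) mod ?M" by (simp add: mod_minus_eq)
    finally show ?thesis .
  qed
  have e2: "(int ((b+c) mod m) - int ((c+a) mod m)) mod ?M = (- ((int a - int b) mod ?M)) mod ?M"
  proof -
    have "(int ((b+c) mod m) - int ((c+a) mod m)) mod ?M = (int (b+c) - int (c+a)) mod ?M"
      by (simp add: zmod_int mod_diff_eq)
    also have "\<dots> = (- (int a - int b)) mod ?M" by simp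
    also have "\<dots> = (- ((int a - int b) mod ?M)) mod ?M" by (simp add: mod_minus_eq)
    finally show ?thesis .
  qed
  have e3: "(int ((c+a) mod m) - int ((a+b) mod m)) mod ?M = (- ((int b - int c) mod ?M)) mod ?M"
  proof -
    have "(int ((c+a) mod m) - int ((a+b) mod m)) mod ?M = (int (c+a) - int (a+b)) mod ?M"
      by (simp add: zmod_int mod_diff_eq)
    also have "\<dots> = (- (int b - int c)) mod ?M" by simp
    also have "\<dots> = (- ((int b - int c) mod ?M)) mod ?M" by (simp add: mod_minus_eq)
    finally show ?thesis .
  qed
  show ?thesis using e1 e2 e3 by (simp add: u dif_def ducci_def)
qed

definition Gm :: "nat \<Rightarrow> nat \<Rightarrow> int \<times> int \<times> int" where
  "Gm m n = (case G n of (x,y,z) \<Rightarrow> (x mod int m, y mod int m, z mod int m))"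

lemma dif_orbit: "dif m ((ducci m ^^ n) (0,0,1)) = Gm m n"
proof (induction n)
  case 0
  show ?case by (simp add: dif_def Gm_def G_def)
next
  case (Suc n)
  obtain x y z where g: "G n = (x,y,z)" by (cases "G n") auto
  have "dif m ((ducci m ^^ Suc n) (0,0,1)) = dif m (ducci m ((ducci m ^^ n) (0,0,1)))" by simp
  also have "\<dots> = (case Gm m n of (x,y,z) \<Rightarrow> ((-z) mod int m, (-x) mod int m, (-y) mod int m))"
    by (simp only: dif_step Suc.IH)
  also have "\<dots> = Gm m (Suc n)"
    by (simp add: Gm_def g G_step mod_minus_eq)
  finally show ?case .
qed

lemma Gm_inj:
  assumes "m \<ge> 3" "Gm m a = Gm m b" shows "a mod 6 = b mod 6"
proof -
  obtain x y z where ga: "G a = (x,y,z)" by (cases "G a") auto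
  obtain x' y' z' where gb: "G b = (x',y',z')" by (cases "G b") auto
  have M: "int m \<ge> 3" using assms(1) by simp
  have rx: "x \<in> {-1,0,1}" "y \<in> {-1,0,1}" "z \<in> {-1,0,1}" using G_range[of a] ga by auto
  have ry: "x' \<in> {-1,0,1}" "y' \<in> {-1,0,1}" "z' \<in> {-1,0,1}" using G_range[of b] gb by auto
  have c: "x mod int m = x' mod int m" "y mod int m = y' mod int m" "z mod int m = z' mod int m"
    using assms(2) ga gb by (auto simp: Gm_def)
  have "x = x'" "y = y'" "z = z'" using small_eq[OF rx(1) ry(1) M c(1)] small_eq[OF rx(2) ry(2) M c(2)]
    small_eq[OF rx(3) ry(3) M c(3)] by auto
  then have "G a = G b" using ga gb by simp
  then show ?thesis by (rule G_inj)
qed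

lemma valid_6:
  assumes "m \<ge> 3" "(ducci m ^^ (l + k)) (0,0,1) = (ducci m ^^ l) (0,0,1)"
  shows "6 dvd k"
proof -
  have "Gm m (l + k) = Gm m l" using assms(2) dif_orbit[of m "l+k"] dif_orbit[of m l] by simp
  then have "(l + k) mod 6 = l mod 6" by (rule Gm_inj[OF assms(1)])
  then show ?thesis by presburger
qed

lemma orbit_bound:
  assumes "m \<ge> 3" shows "(ducci m ^^ n) (0,0,1) \<in> {..<m} \<times> {..<m} \<times> {..<m}"
proof (cases n)
  case 0 then show ?thesis using assms by simp
next
  case (Suc n')
  obtain a b c where "(ducci m ^^ n') (0,0,1) = (a,b,c)" by (cases "(ducci m ^^ n') (0,0,1)") auto
  then show ?thesis using Suc assms by (simp add: ducci_def)
qed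

lemma exists_valid:
  assumes "m \<ge> 3"
  shows "\<exists>k. k \<ge> 1 \<and> (\<exists>l. (ducci m ^^ (l + k)) (0,0,1) = (ducci m ^^ l) (0,0,1))"
proof -
  let ?f = "\<lambda>n. (ducci m ^^ n) (0,0,1)"
  have "range ?f \<subseteq> {..<m} \<times> {..<m} \<times> {..<m}" by (intro image_subsetI orbit_bound[OF assms])
  then have "finite (range ?f)" by (rule finite_subset) auto
  then have "\<not> inj ?f" using finite_imageD by blast
  then obtain i j where ij: "i \<noteq> j" "?f i = ?f j" unfolding inj_def by blast
  show ?thesis
  proof (cases "i < j")
    case True
    then show ?thesis using ij by (intro exI[of _ "j - i"]) (auto intro!: exI[of _ i])
  next
    case False
    then have "j < i" using ij by simp
    then show ?thesis using ij by (intro exI[of _ "i - j"]) (auto intro!: exI[of _ j])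
  qed
qed

theorem theorem3p5:
  fixes m :: nat
  assumes "m \<ge> 3"
  shows "6 dvd P3 m"
proof -
  have "P3 m \<ge> 1 \<and> (\<exists>l. (ducci m ^^ (l + P3 m)) (0,0,1) = (ducci m ^^ l) (0,0,1))"
    unfolding P3_def ducci_period_def using exists_valid[OF assms] by (rule LeastI_ex)
  then obtain l where "(ducci m ^^ (l + P3 m)) (0,0,1) = (ducci m ^^ l) (0,0,1)" by blast
  then show ?thesis by (rule valid_6[OF assms])
qed

end
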